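(* Let $n,r\ge 1$ be integers. If $G(n,r)$ has a vertex $v$ all of whose positive entries equal $1$, then the maximum degree of $G(n,r)$ satisfies $\Delta(G(n,r))=d(v)=\frac{nr(nr-2r+1)}{2}$.
   Context: For integers $n,r\ge 1$, $G(n,r)$ is the simple undirected graph whose vertices are the $n\times n$ matrices with non-negative integer entries all of whose row sums and column sums equal $r$. Let $e_{ij}$ be the $n\times n$ matrix with a $1$ in position $(i,j)$ and $0$ elsewhere, and let $\mathcal{B}=\{\pm(e_{ij}+e_{kl}-e_{il}-e_{kj}) : 1\le i<k\le n,\ 1\le j<l\le n\}$. Two vertices $u,v$ are adjacent iff $u-v\in\mathcal{B}$. $d(v)$ denotes the degree of $v$ and $\Delta(G)$ the maximum degree of $G$. *)

theory Defs
  imports Complex_Main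
begin

text \<open>An n x n matrix is represented as a function nat => nat => int whose
entries vanish outside the index range {0..<n} x {0..<n} (indices 0-based).\<close>

definition vertices :: "nat \<Rightarrow> nat \<Rightarrow> (nat \<Rightarrow> nat \<Rightarrow> int) set" where
  "vertices n r = {M. (\<forall>i j. (n \<le> i \<or> n \<le> j) \<longrightarrow> M i j = 0)
      \<and> (\<forall>i j. 0 \<le> M i j)
      \<and> (\<forall>i<n. (\<Sum>j<n. M i j) = int r)
      \<and> (\<forall>j<n. (\<Sum>i<n. M i j) = int r)}"

definition unitm :: "nat \<Rightarrow> nat \<Rightarrow> nat \<Rightarrow> nat \<Rightarrow> int" where
  "unitm i j = (\<lambda>a b. if a = i \<and> b = j then 1 else 0)"

definition moves :: "nat \<Rightarrow> (nat \<Rightarrow> nat \<Rightarrow> int) set" where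
  "moves n = {(\<lambda>a b. s * (unitm i j a b + unitm k l a b - unitm i l a b - unitm k j a b))
      | i k j l s. i < k \<and> k < n \<and> j < l \<and> l < n \<and> (s = 1 \<or> s = -1)}"

definition adj :: "nat \<Rightarrow> nat \<Rightarrow> (nat \<Rightarrow> nat \<Rightarrow> int) \<Rightarrow> (nat \<Rightarrow> nat \<Rightarrow> int) \<Rightarrow> bool" where
  "adj n r u v \<longleftrightarrow> u \<in> vertices n r \<and> v \<in> vertices n r \<and> (\<lambda>a b. u a b - v a b) \<in> moves n"

definition degree :: "nat \<Rightarrow> nat \<Rightarrow> (nat \<Rightarrow> nat \<Rightarrow> int) \<Rightarrow> nat" where
  "degree n r v = card {u \<in> vertices n r. adj n r u v}"

definition max_degree :: "nat \<Rightarrow> nat \<Rightarrow> nat" where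
  "max_degree n r = Max (degree n r ` vertices n r)"

end

theory Submission imports Defs begin

lemma cs_int:
  fixes a :: "nat \<Rightarrow> int"
  shows "(\<Sum>i<n. a i)^2 \<le> int n * (\<Sum>i<n. (a i)^2)"
proof -
  have "0 \<le> (\<Sum>i<n. \<Sum>j<n. (a i - a j)^2)" by (intro sum_nonneg) auto
  also have "\<dots> = (\<Sum>i<n. \<Sum>j<n. (a i)^2 + (a j)^2 - 2 * a i * a j)"
    by (simp add: power2_diff)
  also have "\<dots> = 2 * (int n * (\<Sum>i<n. (a i)^2)) - 2 * (\<Sum>i<n. a i)^2"
    by (simp add: sum.distrib sum_subtractf sum_distrib_left sum_distrib_right power2_eq_square mult.assoc) (rule sum.swap)
  finally show ?thesis by simp
qed

lemma row_unit: "j < n \<Longrightarrow> (\<Sum>b<n. unitm i j a b) = (if a = i then 1 else 0)"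
  by (simp add: unitm_def)
lemma col_unit: "i < n \<Longrightarrow> (\<Sum>a<n. unitm i j a b) = (if b = j then 1 else 0)"
  by (simp add: unitm_def)

lemma finite_vertices: "finite (vertices n r)"
proof -
  let ?R = "{g :: nat \<Rightarrow> int. \<forall>j. (j \<in> {..<n} \<longrightarrow> g j \<in> {0..int r}) \<and> (j \<notin> {..<n} \<longrightarrow> g j = 0)}"
  have fR: "finite ?R" by (rule finite_set_of_finite_funs) auto
  have "finite {f :: nat \<Rightarrow> nat \<Rightarrow> int. \<forall>i. (i \<in> {..<n} \<longrightarrow> f i \<in> ?R) \<and> (i \<notin> {..<n} \<longrightarrow> f i = (\<lambda>_. 0))}"
    by (rule finite_set_of_finite_funs) (use fR in auto)
  moreover have "vertices n r \<subseteq> {f :: nat \<Rightarrow> nat \<Rightarrow> int. \<forall>i. (i \<in> {..<n} \<longrightarrow> f i \<in> ?R) \<and> (i \<notin> {..<n} \<longrightarrow> f i = (\<lambda>_. 0))}"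
  proof
    fix M assume M: "M \<in> vertices n r"
    have le: "M i j \<le> int r" if "i < n" "j < n" for i j
    proof -
      have "M i j \<le> (\<Sum>j'<n. M i j')"
        using M that by (intro member_le_sum) (auto simp: vertices_def)
      thus ?thesis using M that by (simp add: vertices_def)
    qed
    show "M \<in> {f. \<forall>i. (i \<in> {..<n} \<longrightarrow> f i \<in> ?R) \<and> (i \<notin> {..<n} \<longrightarrow> f i = (\<lambda>_. 0))}"
      using M le by (auto simp: vertices_def)
  qed
  ultimately show ?thesis by (rule finite_subset[rotated])
qed

definition SS :: "nat \<Rightarrow> (nat \<Rightarrow> nat \<Rightarrow> int) \<Rightarrow> (nat \<times> nat) set" where
  "SS n w = {(i,j). i < n \<and> j < n \<and> w i j > 0}"
definition PP :: "nat \<Rightarrow> (nat \<Rightarrow> nat \<Rightarrow> int) \<Rightarrow> ((nat \<times> nat) \<times> (nat \<times> nat)) set" where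
  "PP n w = {(c,c'). c \<in> SS n w \<and> c' \<in> SS n w \<and> fst c < fst c' \<and> snd c \<noteq> snd c'}"
definition QQ :: "nat \<Rightarrow> (nat \<Rightarrow> nat \<Rightarrow> int) \<Rightarrow> ((nat \<times> nat) \<times> (nat \<times> nat)) set" where
  "QQ n w = {(c,c'). c \<in> SS n w \<and> c' \<in> SS n w \<and> fst c \<noteq> fst c' \<and> snd c \<noteq> snd c'}"
definition phi :: "(nat \<Rightarrow> nat \<Rightarrow> int) \<Rightarrow> (nat \<times> nat) \<times> (nat \<times> nat) \<Rightarrow> nat \<Rightarrow> nat \<Rightarrow> int" where
  "phi w p = (case p of ((i,j),(k,l)) \<Rightarrow>
     (\<lambda>a b. w a b - unitm i j a b - unitm k l a b + unitm i l a b + unitm k j a b))"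

lemma finite_SS: "finite (SS n w)"
  by (rule finite_subset[of _ "{..<n} \<times> {..<n}"]) (auto simp: SS_def)

lemma finite_PP: "finite (PP n w)"
  by (rule finite_subset[of _ "SS n w \<times> SS n w"]) (auto simp: PP_def finite_SS)

lemma card_QQ: "card (QQ n w) = 2 * card (PP n w)"
proof -
  let ?sw = "\<lambda>(c::nat\<times>nat, c'::nat\<times>nat). (c', c)"
  have eq: "QQ n w = PP n w \<union> ?sw ` PP n w"
    by (auto simp: QQ_def PP_def image_iff)
  have inj: "inj_on ?sw (PP n w)" by (auto simp: inj_on_def)
  have fin2: "finite (?sw ` PP n w)" using finite_PP by blast
  have "card (PP n w \<union> ?sw ` PP n w) = card (PP n w) + card (?sw ` PP n w)"
    by (rule card_Un_disjoint[OF finite_PP fin2]) (auto simp: PP_def)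
  also have "card (?sw ` PP n w) = card (PP n w)" using card_image[OF inj] .
  finally show ?thesis using eq by simp
qed

lemma D_one:
  assumes "i < k" "j \<noteq> l"
  shows "unitm i j a b + unitm k l a b - unitm i l a b - unitm k j a b = 1 \<longleftrightarrow> (a = i \<and> b = j) \<or> (a = k \<and> b = l)"
  using assms by (auto simp: unitm_def)

lemma phi_D: "phi w ((i,j),(k,l)) a b = w a b - (unitm i j a b + unitm k l a b - unitm i l a b - unitm k j a b)"
  by (simp add: phi_def)

lemma phi_inj: "inj_on (phi w) (PP n w)"
proof (rule inj_onI)
  fix p q assume p: "p \<in> PP n w" and q: "q \<in> PP n w" and e: "phi w p = phi w q"
  obtain i j k l where pp: "p = ((i,j),(k,l))" by (metis prod.collapse)
  obtain i' j' k' l' where qq: "q = ((i',j'),(k',l'))" by (metis prod.collapse)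
  have c1: "i < k" "j \<noteq> l" using p pp by (auto simp: PP_def)
  have c2: "i' < k'" "j' \<noteq> l'" using q qq by (auto simp: PP_def)
  have e1: "phi w p a b = phi w q a b" for a b using e by auto
  have "(a = i \<and> b = j \<or> a = k \<and> b = l) \<longleftrightarrow> (a = i' \<and> b = j' \<or> a = k' \<and> b = l')" for a b
  proof -
    have "unitm i j a b + unitm k l a b - unitm i l a b - unitm k j a b =
          unitm i' j' a b + unitm k' l' a b - unitm i' l' a b - unitm k' j' a b"
      using e1[of a b] unfolding pp qq phi_D by simp
    thus ?thesis using D_one[OF c1, of a b] D_one[OF c2, of a b] by simp
  qed
  from this[of i j] this[of k l] this[of i' j'] c1 c2 show "p = q" unfolding pp qq
    by auto
qed

lemma phi_vertex:
  assumes w: "w \<in> vertices n r" and p: "((i,j),(k,l)) \<in> PP n w"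
  shows "phi w ((i,j),(k,l)) \<in> vertices n r"
proof -
  have c: "i < k" "j \<noteq> l" "k < n" "l < n" "i < n" "j < n" "w i j > 0" "w k l > 0"
    using p by (auto simp: PP_def SS_def)
  have out: "\<forall>a b. (n \<le> a \<or> n \<le> b) \<longrightarrow> phi w ((i,j),(k,l)) a b = 0"
    using w c by (auto simp: vertices_def phi_def unitm_def)
  have nn: "\<forall>a b. 0 \<le> phi w ((i,j),(k,l)) a b"
    using w c by (auto simp: vertices_def phi_def unitm_def)
  have rows: "\<forall>a<n. (\<Sum>b<n. phi w ((i,j),(k,l)) a b) = int r"
    using w c by (simp add: vertices_def phi_def sum.distrib sum_subtractf row_unit)
  have cols: "\<forall>b<n. (\<Sum>a<n. phi w ((i,j),(k,l)) a b) = int r"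
    using w c by (simp add: vertices_def phi_def sum.distrib sum_subtractf col_unit)
  show ?thesis using out nn rows cols by (simp add: vertices_def)
qed

lemma neighbors_eq:
  assumes w: "w \<in> vertices n r"
  shows "{u \<in> vertices n r. adj n r u w} = phi w ` PP n w"
proof
  show "phi w ` PP n w \<subseteq> {u \<in> vertices n r. adj n r u w}"
  proof
    fix u assume "u \<in> phi w ` PP n w"
    then obtain i j k l where p: "((i,j),(k,l)) \<in> PP n w" and u: "u = phi w ((i,j),(k,l))"
      by (metis imageE prod.collapse)
    have c: "i < k" "j \<noteq> l" "k < n" "l < n" "i < n" "j < n"
      using p by (auto simp: PP_def SS_def)
    have uv: "u \<in> vertices n r" using phi_vertex[OF w p] u by simp
    have "(\<lambda>a b. u a b - w a b) \<in> moves n"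
    proof (cases "j < l")
      case True
      have "(\<lambda>a b. u a b - w a b) = (\<lambda>a b. (-1) * (unitm i j a b + unitm k l a b - unitm i l a b - unitm k j a b))"
        by (simp add: u phi_def algebra_simps)
      then show ?thesis unfolding moves_def using c True by blast
    next
      case False
      hence lj: "l < j" using c by simp
      have "(\<lambda>a b. u a b - w a b) = (\<lambda>a b. 1 * (unitm i l a b + unitm k j a b - unitm i j a b - unitm k l a b))"
        by (simp add: u phi_def algebra_simps)
      then show ?thesis unfolding moves_def using c lj by blast
    qed
    then show "u \<in> {u \<in> vertices n r. adj n r u w}" using uv w by (simp add: adj_def)
  qed
next
  show "{u \<in> vertices n r. adj n r u w} \<subseteq> phi w ` PP n w"
  proof
    fix u assume "u \<in> {u \<in> vertices n r. adj n r u w}"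
    hence uv: "u \<in> vertices n r" and m: "(\<lambda>a b. u a b - w a b) \<in> moves n" by (auto simp: adj_def)
    from m obtain i k j l s where c: "i < k" "k < n" "j < l" "l < n" "s = 1 \<or> s = -1"
      and e: "(\<lambda>a b. u a b - w a b) = (\<lambda>a b. s * (unitm i j a b + unitm k l a b - unitm i l a b - unitm k j a b))"
      unfolding moves_def by blast
    have ue: "u a b = w a b + s * (unitm i j a b + unitm k l a b - unitm i l a b - unitm k j a b)" for a b
      using fun_cong[OF fun_cong[OF e, of a], of b] by simp
    have unn: "0 \<le> u a b" for a b using uv by (simp add: vertices_def)
    show "u \<in> phi w ` PP n w"
    proof (cases "s = -1")
      case True
      have "0 \<le> u i j" "0 \<le> u k l" by (rule unn)+
      hence "w i j > 0" "w k l > 0" using c True ue[of i j] ue[of k l] by (auto simp: unitm_def)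
      hence pin: "((i,j),(k,l)) \<in> PP n w" using c by (auto simp: PP_def SS_def)
      have "u = phi w ((i,j),(k,l))" using True by (intro ext) (simp add: ue phi_def)
      thus ?thesis using pin by blast
    next
      case False
      hence s1: "s = 1" using c by simp
      have "0 \<le> u i l" "0 \<le> u k j" by (rule unn)+
      hence "w i l > 0" "w k j > 0" using c s1 ue[of i l] ue[of k j] by (auto simp: unitm_def)
      hence pin: "((i,l),(k,j)) \<in> PP n w" using c by (auto simp: PP_def SS_def)
      have "u = phi w ((i,l),(k,j))" using s1 by (intro ext) (simp add: ue phi_def)
      thus ?thesis using pin by blast
    qed
  qed
qed

lemma degree_PP: "w \<in> vertices n r \<Longrightarrow> degree n r w = card (PP n w)"
  unfolding degree_def by (simp add: neighbors_eq card_image[OF phi_inj])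

definition xx :: "(nat \<Rightarrow> nat \<Rightarrow> int) \<Rightarrow> nat \<Rightarrow> nat \<Rightarrow> int" where
  "xx w i j = (if w i j > 0 then 1 else 0)"

lemma card_QQ_sum:
  "int (card (QQ n w)) = (\<Sum>i<n. \<Sum>j<n. \<Sum>k<n. \<Sum>l<n.
      xx w i j * xx w k l * (1 - (if i = k then 1 else 0)) * (1 - (if j = l then 1 else 0)))"
proof -
  let ?U = "{..<n} \<times> {..<n}"
  have fU: "finite (?U \<times> ?U)" by simp
  have QQe: "QQ n w = {p \<in> ?U \<times> ?U. p \<in> QQ n w}" by (auto simp: QQ_def SS_def)
  have "int (card (QQ n w)) = (\<Sum>p\<in>QQ n w. 1)" by simp
  also have "\<dots> = (\<Sum>p\<in>?U \<times> ?U. if p \<in> QQ n w then 1 else 0)"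
    by (subst QQe, subst sum.inter_filter[OF fU]) simp
  also have "\<dots> = (\<Sum>i<n. \<Sum>j<n. \<Sum>k<n. \<Sum>l<n. if ((i,j),(k,l)) \<in> QQ n w then 1 else 0)"
    by (simp add: sum.cartesian_product')
  also have "\<dots> = (\<Sum>i<n. \<Sum>j<n. \<Sum>k<n. \<Sum>l<n.
      xx w i j * xx w k l * (1 - (if i = k then 1 else 0)) * (1 - (if j = l then 1 else 0)))"
    by (intro sum.cong refl) (auto simp: QQ_def SS_def xx_def)
  finally show ?thesis .
qed

lemma delta_sum: "(\<Sum>l<(n::nat). (f l::int) * (if j = l then 1 else 0)) = (if j < n then f j else 0)"
proof -
  have "(\<Sum>l<n. (f l::int) * (if j = l then 1 else 0)) = (\<Sum>l<n. if j = l then f l else 0)"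
    by (intro sum.cong) auto
  also have "\<dots> = (if j < n then f j else 0)" by (simp only: sum.delta'[OF finite_lessThan] lessThan_iff)
  finally show ?thesis .
qed

lemma skip_sum: "(i::nat) < n \<Longrightarrow> (\<Sum>k<n. if i = k then 0 else (g k::int)) = (\<Sum>k<n. g k) - g i"
proof -
  assume i: "i < n"
  have "(\<Sum>k<n. g k) = (\<Sum>k<n. (if i = k then g k else 0) + (if i = k then 0 else g k))"
    by (intro sum.cong) auto
  also have "\<dots> = (\<Sum>k<n. (if i = k then g k else 0)) + (\<Sum>k<n. if i = k then 0 else g k)"
    by (rule sum.distrib)
  also have "(\<Sum>k<n. (if i = k then g k else 0)) = g i" 
    using i by (simp only: sum.delta'[OF finite_lessThan] lessThan_iff if_True)
  finally show ?thesis by simp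
qed

lemma inner_sum:
  fixes x :: "nat \<Rightarrow> nat \<Rightarrow> int"
  assumes "i < n" "j < n"
  shows "(\<Sum>k<n. \<Sum>l<n. x k l * (1 - (if i = k then 1 else 0)) * (1 - (if j = l then 1 else 0)))
    = (\<Sum>k<n. \<Sum>l<n. x k l) - (\<Sum>l<n. x i l) - (\<Sum>k<n. x k j) + x i j"
proof -
  have "(\<Sum>k<n. \<Sum>l<n. x k l * (1 - (if i = k then 1 else 0)) * (1 - (if j = l then 1 else 0)))
     = (\<Sum>k<n. (\<Sum>l<n. x k l) - (\<Sum>l<n. if i = k then x k l else 0) - x k j + (if i = k then x k j else 0))"
    using assms by (intro sum.cong refl) (auto simp: sum.distrib sum_subtractf algebra_simps delta_sum)
  also have "\<dots> = (\<Sum>k<n. \<Sum>l<n. x k l) - (\<Sum>l<n. x i l) - (\<Sum>k<n. x k j) + x i j"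
    using assms by (simp add: sum.distrib sum_subtractf if_distrib skip_sum cong: if_cong)
  finally show ?thesis .
qed

lemma card_QQ_formula:
  fixes w :: "nat \<Rightarrow> nat \<Rightarrow> int" and n :: nat
  defines "a \<equiv> \<lambda>i. \<Sum>j<n. xx w i j" and "b \<equiv> \<lambda>j. \<Sum>i<n. xx w i j"
  defines "s \<equiv> \<Sum>i<n. a i"
  shows "int (card (QQ n w)) = s^2 + s - (\<Sum>i<n. (a i)^2) - (\<Sum>j<n. (b j)^2)"
proof -
  have sb: "s = (\<Sum>j<n. b j)" unfolding s_def a_def b_def by (rule sum.swap)
  have xsq: "xx w i j * xx w i j = xx w i j" for i j by (simp add: xx_def)
  have "int (card (QQ n w)) = (\<Sum>i<n. \<Sum>j<n. xx w i j * (s - a i - b j + xx w i j))"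
    unfolding card_QQ_sum
  proof (intro sum.cong refl)
    fix i j assume i: "i \<in> {..<n}" and j: "j \<in> {..<n}"
    have "(\<Sum>k<n. \<Sum>l<n. xx w i j * xx w k l * (1 - (if i = k then 1 else 0)) * (1 - (if j = l then 1 else 0)))
      = xx w i j * (\<Sum>k<n. \<Sum>l<n. xx w k l * (1 - (if i = k then 1 else 0)) * (1 - (if j = l then 1 else 0)))"
      by (simp add: sum_distrib_left mult.assoc)
    also have "\<dots> = xx w i j * (s - a i - b j + xx w i j)"
      using i j by (simp add: inner_sum s_def a_def b_def)
    finally show "(\<Sum>k<n. \<Sum>l<n. xx w i j * xx w k l * (1 - (if i = k then 1 else 0)) * (1 - (if j = l then 1 else 0)))
      = xx w i j * (s - a i - b j + xx w i j)" .
  qed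
  also have "\<dots> = (\<Sum>i<n. \<Sum>j<n. s * xx w i j - a i * xx w i j - b j * xx w i j + xx w i j)"
    by (intro sum.cong refl) (simp add: algebra_simps xsq)
  also have "\<dots> = s * s - (\<Sum>i<n. a i * a i) - (\<Sum>i<n. \<Sum>j<n. b j * xx w i j) + s"
    by (simp add: sum.distrib sum_subtractf sum_distrib_left[symmetric] s_def a_def)
  also have "(\<Sum>i<n. \<Sum>j<n. b j * xx w i j) = (\<Sum>j<n. b j * b j)"
    by (subst sum.swap) (simp add: sum_distrib_left[symmetric] b_def)
  finally show ?thesis by (simp add: power2_eq_square)
qed

lemma xx_le: "w \<in> vertices n r \<Longrightarrow> xx w i j \<le> w i j"
  by (auto simp: xx_def vertices_def)

lemma QQ_bound:
  assumes w: "w \<in> vertices n r" and n2: "2 \<le> n"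
  shows "int (card (QQ n w)) \<le> int n * int r * (int n * int r - 2 * int r + 1)"
proof -
  define a where "a = (\<lambda>i. \<Sum>j<n. xx w i j)"
  define b where "b = (\<lambda>j. \<Sum>i<n. xx w i j)"
  define s where "s = (\<Sum>i<n. a i)"
  have F: "int (card (QQ n w)) = s^2 + s - (\<Sum>i<n. (a i)^2) - (\<Sum>j<n. (b j)^2)"
    unfolding a_def b_def s_def by (rule card_QQ_formula)
  have sb: "s = (\<Sum>j<n. b j)" unfolding s_def a_def b_def by (rule sum.swap)
  have cs1: "s^2 \<le> int n * (\<Sum>i<n. (a i)^2)" unfolding s_def by (rule cs_int)
  have cs2: "s^2 \<le> int n * (\<Sum>j<n. (b j)^2)" unfolding sb by (rule cs_int)
  have ai: "a i \<le> int r" if "i < n" for i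
  proof -
    have "a i \<le> (\<Sum>j<n. w i j)" unfolding a_def by (intro sum_mono xx_le[OF w])
    thus ?thesis using w that by (simp add: vertices_def)
  qed
  have s0: "0 \<le> s" unfolding s_def a_def by (intro sum_nonneg) (simp add: xx_def)
  have sN: "s \<le> int n * int r" unfolding s_def using sum_mono[of "{..<n}" a "\<lambda>_. int r"] ai by simp
  define N where "N = int n * int r"
  have "int n * int (card (QQ n w)) \<le> (int n - 2) * s^2 + int n * s"
    using cs1 cs2 unfolding F by (simp add: algebra_simps)
  also have "\<dots> \<le> (int n - 2) * N^2 + int n * N"
  proof -
    have "s^2 \<le> N^2" using s0 sN unfolding N_def by (intro power_mono) auto
    hence "(int n - 2) * s^2 \<le> (int n - 2) * N^2" using n2 by (intro mult_left_mono) auto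
    moreover have "int n * s \<le> int n * N" using sN unfolding N_def by (intro mult_left_mono) auto
    ultimately show ?thesis by simp
  qed
  also have "\<dots> = int n * (int n * int r * (int n * int r - 2 * int r + 1))"
    unfolding N_def by (simp add: algebra_simps power2_eq_square)
  finally show ?thesis using n2 by simp
qed

lemma QQ_v:
  assumes v: "v \<in> vertices n r" and one: "\<forall>i j. v i j > 0 \<longrightarrow> v i j = 1"
  shows "int (card (QQ n v)) = int n * int r * (int n * int r - 2 * int r + 1)"
proof -
  have xv: "xx v i j = v i j" for i j
  proof -
    have "0 \<le> v i j" using v by (simp add: vertices_def)
    thus ?thesis using one by (cases "v i j > 0") (auto simp: xx_def)
  qed
  have a: "(\<Sum>j<n. xx v i j) = int r" if "i < n" for i using v that by (simp add: xv vertices_def)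
  have b: "(\<Sum>i<n. xx v i j) = int r" if "j < n" for j using v that by (simp add: xv vertices_def)
  show ?thesis unfolding card_QQ_formula by (simp add: a b algebra_simps power2_eq_square)
qed

theorem proposition2p3:
  fixes n r :: nat and v :: "nat \<Rightarrow> nat \<Rightarrow> int"
  assumes "n \<ge> 1" and "r \<ge> 1"
    and "v \<in> vertices n r"
    and "\<forall>i j. v i j > 0 \<longrightarrow> v i j = 1"
  shows "max_degree n r = degree n r v \<and>
         real (degree n r v) = real n * real r * (real n * real r - 2 * real r + 1) / 2"
proof -
  note v = assms(3) and one = assms(4)
  have dv: "2 * int (degree n r v) = int n * int r * (int n * int r - 2 * int r + 1)"
    using QQ_v[OF v one] card_QQ[of n v] degree_PP[OF v] by simp
  have le: "degree n r w \<le> degree n r v" if w: "w \<in> vertices n r" for w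
  proof (cases "n = 1")
    case True
    have "PP n w = {}" using True by (auto simp: PP_def SS_def)
    thus ?thesis using degree_PP[OF w] by simp
  next
    case False
    hence n2: "2 \<le> n" using assms(1) by simp
    have "2 * int (degree n r w) \<le> 2 * int (degree n r v)"
      using QQ_bound[OF w n2] card_QQ[of n w] degree_PP[OF w] dv by simp
    thus ?thesis by simp
  qed
  have "max_degree n r = degree n r v"
    unfolding max_degree_def
    by (rule Max_eqI) (use finite_vertices le v in auto)
  moreover have "real (degree n r v) = real n * real r * (real n * real r - 2 * real r + 1) / 2"
  proof -
    have "real_of_int (2 * int (degree n r v)) = real_of_int (int n * int r * (int n * int r - 2 * int r + 1))"
      using dv by simp
    thus ?thesis by simp
  qed
  ultimately show ?thesis by simp
qed
end
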